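(* Let $\kappa$ be strongly inaccessible and let $A\subseteq\kappa$ be a non-stationary set of regular cardinals unbounded in $\kappa$. Then $\kappa\notin\operatorname{pcf}(A)$.
   Context: $\operatorname{pcf}(A)=\{\operatorname{cf}(\prod A/D): D\text{ an ultrafilter on }A\}$, where $\prod A$ is the set of functions $f$ on $A$ with $f(a)\in a$ and $\prod A/D$ is ordered by $f<_Dg$ iff $\{a\in A:f(a)<g(a)\}\in D$. *)

theory Defs
  imports Main "HOL-Library.Equipollence" "HOL-Library.FuncSet" "HOL-Library.Countable_Set"
begin

text \<open>Ordinals are modelled as elements of an arbitrary well-ordered type 'o;
  the ordinal alpha is identified with the initial segment {..<alpha}.\<close>

definition is_cardinal :: "'o::wellorder \<Rightarrow> bool" where
  "is_cardinal \<alpha> \<longleftrightarrow> (\<forall>\<beta><\<alpha>. \<not> ({..<\<beta>} \<approx> {..<\<alpha>}))"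

definition unbounded_in :: "'o::wellorder set \<Rightarrow> 'o \<Rightarrow> bool" where
  "unbounded_in X \<alpha> \<longleftrightarrow> X \<subseteq> {..<\<alpha>} \<and> (\<forall>\<beta><\<alpha>. \<exists>x\<in>X. \<beta> \<le> x)"

definition regular_cardinal :: "'o::wellorder \<Rightarrow> bool" where
  "regular_cardinal \<alpha> \<longleftrightarrow> is_cardinal \<alpha> \<and> infinite {..<\<alpha>} \<and>
     (\<forall>X. unbounded_in X \<alpha> \<longrightarrow> X \<approx> {..<\<alpha>})"

definition strongly_inaccessible :: "'o::wellorder \<Rightarrow> bool" where
  "strongly_inaccessible \<kappa> \<longleftrightarrow> regular_cardinal \<kappa> \<and> uncountable {..<\<kappa>} \<and>
     (\<forall>\<beta><\<kappa>. Pow {..<\<beta>} \<prec> {..<\<kappa>})"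

definition closed_in :: "'o::wellorder set \<Rightarrow> 'o \<Rightarrow> bool" where
  "closed_in C \<kappa> \<longleftrightarrow> (\<forall>\<gamma><\<kappa>. (\<exists>c\<in>C. c < \<gamma>) \<and> (\<forall>\<delta><\<gamma>. \<exists>c\<in>C. \<delta> < c \<and> c < \<gamma>)
      \<longrightarrow> \<gamma> \<in> C)"

definition club :: "'o::wellorder set \<Rightarrow> 'o \<Rightarrow> bool" where
  "club C \<kappa> \<longleftrightarrow> unbounded_in C \<kappa> \<and> closed_in C \<kappa>"

definition stationary :: "'o::wellorder set \<Rightarrow> 'o \<Rightarrow> bool" where
  "stationary S \<kappa> \<longleftrightarrow> S \<subseteq> {..<\<kappa>} \<and> (\<forall>C. club C \<kappa> \<longrightarrow> S \<inter> C \<noteq> {})"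

definition ultrafilter_on :: "'a set \<Rightarrow> 'a set set \<Rightarrow> bool" where
  "ultrafilter_on A D \<longleftrightarrow> D \<subseteq> Pow A \<and> A \<in> D \<and> {} \<notin> D \<and>
     (\<forall>X\<in>D. \<forall>Y\<in>D. X \<inter> Y \<in> D) \<and>
     (\<forall>X\<in>D. \<forall>Y. X \<subseteq> Y \<and> Y \<subseteq> A \<longrightarrow> Y \<in> D) \<and>
     (\<forall>X. X \<subseteq> A \<longrightarrow> X \<in> D \<or> A - X \<in> D)"

text \<open>prod A = functions f on A with f(a) \<in> a, i.e. f a < a\<close>
definition prodA :: "'o::wellorder set \<Rightarrow> ('o \<Rightarrow> 'o) set" where
  "prodA A = (\<Pi>\<^sub>E a\<in>A. {..<a})"

definition le_mod :: "'o::wellorder set \<Rightarrow> 'o set set \<Rightarrow> ('o \<Rightarrow> 'o) \<Rightarrow> ('o \<Rightarrow> 'o) \<Rightarrow> bool" where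
  "le_mod A D g f \<longleftrightarrow> {a\<in>A. g a \<le> f a} \<in> D"

definition cofinal_mod :: "'o::wellorder set \<Rightarrow> 'o set set \<Rightarrow> ('o \<Rightarrow> 'o) set \<Rightarrow> bool" where
  "cofinal_mod A D F \<longleftrightarrow> F \<subseteq> prodA A \<and> (\<forall>g\<in>prodA A. \<exists>f\<in>F. le_mod A D g f)"

definition cf_is :: "'o::wellorder set \<Rightarrow> 'o set set \<Rightarrow> 'b set \<Rightarrow> bool" where
  "cf_is A D K \<longleftrightarrow> (\<exists>F. cofinal_mod A D F \<and> F \<approx> K) \<and>
     (\<forall>F. cofinal_mod A D F \<longrightarrow> \<not> F \<prec> K)"

definition pcf :: "'o::wellorder set \<Rightarrow> 'o set" where
  "pcf A = {\<mu>. is_cardinal \<mu> \<and> (\<exists>D. ultrafilter_on A D \<and> cf_is A D {..<\<mu>})}"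

end

theory Submission
  imports Defs
begin

lemma atMost_eq_insert: "{..(d::'o::wellorder)} = insert d {..<d}"
  by auto

lemma reg_not_eq:
  fixes a d :: "'o::wellorder"
  assumes "regular_cardinal a" "d < a"
  shows "\<not> ({..d} \<approx> {..<a})"
proof
  assume e: "{..d} \<approx> {..<a}"
  have inf: "infinite {..<a}" using assms(1) unfolding regular_cardinal_def by blast
  have "infinite {..d}" using e inf eqpoll_finite_iff by blast
  hence "infinite {..<d}" by (simp add: atMost_eq_insert)
  hence "{..d} \<approx> {..<d}" by (simp add: atMost_eq_insert infinite_insert_eqpoll)
  hence "{..<d} \<approx> {..<a}" using e eqpoll_sym eqpoll_trans by blast
  thus False using assms unfolding regular_cardinal_def is_cardinal_def by blast
qed

lemma reg_bounded:
  fixes a d :: "'o::wellorder"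
  assumes "regular_cardinal a" "d < a" "V \<subseteq> {..<a}" "V \<lesssim> {..d}"
  shows "\<exists>b<a. \<forall>v\<in>V. v < b"
proof (rule ccontr)
  assume "\<not> ?thesis"
  hence "\<forall>b<a. \<exists>v\<in>V. b \<le> v" by (meson not_le)
  hence "unbounded_in V a" using assms(3) unfolding unbounded_in_def by blast
  hence "V \<approx> {..<a}" using assms(1) unfolding regular_cardinal_def by blast
  hence "{..<a} \<lesssim> {..d}" using assms(4) eqpoll_sym lepoll_trans1 by blast
  moreover have "{..d} \<lesssim> {..<a}" using assms(2) by (intro subset_imp_lepoll) auto
  ultimately have "{..d} \<approx> {..<a}" by (simp add: lepoll_antisym)
  thus False using reg_not_eq assms(1,2) by blast
qed

lemma small_pow:
  fixes \<kappa> g :: "'o::wellorder"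
  assumes "strongly_inaccessible \<kappa>" "g < \<kappa>"
  shows "Pow ({..g} \<times> {..g}) \<prec> {..<\<kappa>}"
proof (cases "finite {..g}")
  case True
  have "infinite {..<\<kappa>}" using assms(1)
    unfolding strongly_inaccessible_def regular_cardinal_def by blast
  thus ?thesis using True by (intro finite_lesspoll_infinite) auto
next
  case False
  hence "infinite {..<g}" by (simp add: atMost_eq_insert)
  hence e1: "{..g} \<approx> {..<g}" by (simp add: atMost_eq_insert infinite_insert_eqpoll)
  have "{..g} \<times> {..g} \<approx> {..g}" using False card_of_Times_same_infinite eqpoll_iff_card_of_ordIso
    by blast
  hence "{..g} \<times> {..g} \<approx> {..<g}" using e1 eqpoll_trans by blast
  then obtain h where "bij_betw h ({..g} \<times> {..g}) {..<g}" unfolding eqpoll_def by blast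
  hence "bij_betw (image h) (Pow ({..g} \<times> {..g})) (Pow {..<g})" by (rule bij_betw_Pow)
  hence "Pow ({..g} \<times> {..g}) \<approx> Pow {..<g}" unfolding eqpoll_def by blast
  moreover have "Pow {..<g} \<prec> {..<\<kappa>}" using assms unfolding strongly_inaccessible_def by blast
  ultimately show ?thesis using eq_lesspoll_trans by blast
qed

theorem lemma4p4:
  fixes \<kappa> :: "'o::wellorder" and A :: "'o set"
  assumes "strongly_inaccessible \<kappa>"
    and "A \<subseteq> {..<\<kappa>}"
    and "\<forall>a\<in>A. regular_cardinal a"
    and "\<not> stationary A \<kappa>"
    and "unbounded_in A \<kappa>"
  shows "\<kappa> \<notin> pcf A"
proof
  assume "\<kappa> \<in> pcf A"
  then obtain D where D: "ultrafilter_on A D" and cf: "cf_is A D {..<\<kappa>}"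
    unfolding pcf_def by blast
  have Dsub: "D \<subseteq> Pow A" and AD: "A \<in> D" and eD: "{} \<notin> D"
    and Dint: "\<And>X Y. X \<in> D \<Longrightarrow> Y \<in> D \<Longrightarrow> X \<inter> Y \<in> D"
    and Dup: "\<And>X Y. X \<in> D \<Longrightarrow> X \<subseteq> Y \<Longrightarrow> Y \<subseteq> A \<Longrightarrow> Y \<in> D"
    and Dult: "\<And>X. X \<subseteq> A \<Longrightarrow> X \<in> D \<or> A - X \<in> D"
    using D unfolding ultrafilter_on_def by blast+
  have nonempty: "\<And>a. a \<in> A \<Longrightarrow> \<exists>x. x < a"
  proof -
    fix a assume "a \<in> A"
    hence "infinite {..<a}" using assms(3) unfolding regular_cardinal_def by blast
    hence "{..<a} \<noteq> {}" by auto
    thus "\<exists>x. x < a" by auto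
  qed
  show False
  proof (cases "\<forall>c<\<kappa>. {a\<in>A. c < a} \<in> D")
    case False
    then obtain g where g: "g < \<kappa>" and nD: "{a\<in>A. g < a} \<notin> D" by blast
    let ?B = "{a\<in>A. a \<le> g}"
    have "A - {a\<in>A. g < a} = ?B" by (auto simp: not_less)
    hence BD: "?B \<in> D" using Dult[of "{a\<in>A. g < a}"] nD by auto
    define h0 where "h0 = (\<lambda>a. if a \<in> A then (SOME x. x < a) else undefined)"
    have h0: "\<And>a. a \<in> A \<Longrightarrow> h0 a < a" unfolding h0_def using nonempty by (auto intro: someI_ex)
    define F where "F = {f \<in> prodA A. \<forall>a\<in>A - ?B. f a = h0 a}"
    have cof: "cofinal_mod A D F"
      unfolding cofinal_mod_def
    proof (intro conjI ballI)
      show "F \<subseteq> prodA A" unfolding F_def by blast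
    next
      fix g' assume g': "g' \<in> prodA A"
      define f where "f = (\<lambda>a. if a \<in> ?B then g' a else h0 a)"
      have "f \<in> prodA A" using g' h0 unfolding prodA_def f_def h0_def PiE_def Pi_def extensional_def
        by auto
      hence fF: "f \<in> F" unfolding F_def f_def by auto
      have "?B \<subseteq> {a\<in>A. g' a \<le> f a}" unfolding f_def by auto
      hence "le_mod A D g' f" unfolding le_mod_def using Dup[OF BD] by blast
      thus "\<exists>f\<in>F. le_mod A D g' f" using fF by blast
    qed
    have "F \<lesssim> Pow ({..g} \<times> {..g})"
    proof -
      let ?G = "\<lambda>f. {(a, f a) | a. a \<in> ?B}"
      have "inj_on ?G F"
      proof
        fix f1 f2 assume f1: "f1 \<in> F" and f2: "f2 \<in> F" and eq: "?G f1 = ?G f2"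
        show "f1 = f2"
        proof
          fix a
          show "f1 a = f2 a"
          proof (cases "a \<in> A")
            case False
            thus ?thesis using f1 f2 unfolding F_def prodA_def PiE_def extensional_def by auto
          next
            case True
            show ?thesis
            proof (cases "a \<in> ?B")
              case True
              hence "(a, f1 a) \<in> ?G f2" using eq by blast
              thus ?thesis by auto
            next
              case False
              thus ?thesis using f1 f2 \<open>a \<in> A\<close> unfolding F_def by auto
            qed
          qed
        qed
      qed
      moreover have "?G ` F \<subseteq> Pow ({..g} \<times> {..g})"
      proof
        fix X assume "X \<in> ?G ` F"
        then obtain f where f: "f \<in> F" and X: "X = ?G f" by blast
        have "\<And>a. a \<in> ?B \<Longrightarrow> f a < a" using f unfolding F_def prodA_def PiE_def by auto
        hence "\<And>a. a \<in> ?B \<Longrightarrow> f a \<le> g" using order.strict_trans2 by fastforce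
        thus "X \<in> Pow ({..g} \<times> {..g})" unfolding X by auto
      qed
      ultimately show ?thesis unfolding lepoll_def by blast
    qed
    hence "F \<prec> {..<\<kappa>}" using small_pow[OF assms(1) g] lesspoll_trans1 by blast
    thus False using cf cof unfolding cf_is_def by blast
  next
    case True
    note tails = True
    obtain C where club: "club C \<kappa>" and disj: "A \<inter> C = {}"
      using assms(2,4) unfolding stationary_def by blast
    have Cub: "unbounded_in C \<kappa>" and Ccl: "closed_in C \<kappa>" using club unfolding club_def by auto
    obtain F where cofF: "cofinal_mod A D F" and FK: "F \<approx> {..<\<kappa>}" using cf unfolding cf_is_def by blast
    then obtain e where e: "bij_betw e {..<\<kappa>} F" using eqpoll_sym unfolding eqpoll_def by blast
    have FP: "F \<subseteq> prodA A" using cofF unfolding cofinal_mod_def by blast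
    have "\<forall>a\<in>A. \<exists>d. d < a \<and> (\<forall>c\<in>C. c < a \<longrightarrow> c \<le> d)"
    proof
      fix a assume aA: "a \<in> A"
      have ak: "a < \<kappa>" using aA assms(2) by auto
      have "a \<notin> C" using aA disj by blast
      hence n: "\<not> ((\<exists>c\<in>C. c < a) \<and> (\<forall>d<a. \<exists>c\<in>C. d < c \<and> c < a))"
        using Ccl ak unfolding closed_in_def by blast
      obtain x where x: "x < a" using nonempty aA by blast
      show "\<exists>d. d < a \<and> (\<forall>c\<in>C. c < a \<longrightarrow> c \<le> d)"
      proof (cases "\<exists>c\<in>C. c < a")
        case False
        thus ?thesis using x by blast
      next
        case True
        with n obtain d where d: "d < a" and nd: "\<not> (\<exists>c\<in>C. d < c \<and> c < a)" by blast
        have "\<forall>c\<in>C. c < a \<longrightarrow> c \<le> d"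
        proof (intro ballI impI)
          fix c assume "c \<in> C" "c < a"
          hence "\<not> d < c" using nd by blast
          thus "c \<le> d" by (simp add: not_less)
        qed
        thus ?thesis using d by blast
      qed
    qed
    from bchoice[OF this] obtain dl where dlall: "\<forall>a\<in>A. dl a < a \<and> (\<forall>c\<in>C. c < a \<longrightarrow> c \<le> dl a)"
      by blast
    have dl: "\<And>a. a \<in> A \<Longrightarrow> dl a < a" using dlall by blast
    have dlC: "\<And>a c. a \<in> A \<Longrightarrow> c \<in> C \<Longrightarrow> c < a \<Longrightarrow> c \<le> dl a" using dlall by blast
    have "\<forall>a\<in>A. \<exists>b<a. \<forall>v\<in>(\<lambda>i. e i a) ` {..dl a}. v < b"
    proof
      fix a assume aA: "a \<in> A"
      have ak: "a < \<kappa>" using aA assms(2) by auto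
      have "(\<lambda>i. e i a) ` {..dl a} \<subseteq> {..<a}"
      proof
        fix v assume "v \<in> (\<lambda>i. e i a) ` {..dl a}"
        then obtain i where i: "i \<le> dl a" and v: "v = e i a" by blast
        have "i < a" using i dl[OF aA] by (rule order.strict_trans1)
        hence "i < \<kappa>" using ak by (rule order.strict_trans)
        hence "e i \<in> prodA A" using e FP unfolding bij_betw_def by blast
        thus "v \<in> {..<a}" using aA v unfolding prodA_def by auto
      qed
      moreover have "regular_cardinal a" using assms(3) aA by blast
      ultimately show "\<exists>b<a. \<forall>v\<in>(\<lambda>i. e i a) ` {..dl a}. v < b"
        using reg_bounded[OF _ dl[OF aA], of "(\<lambda>i. e i a) ` {..dl a}"] image_lepoll[of "\<lambda>i. e i a" "{..dl a}"]
        by blast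
    qed
    hence "\<forall>a\<in>A. \<exists>b. b < a \<and> (\<forall>i\<in>{..dl a}. e i a < b)" by blast
    from bchoice[OF this] obtain bl where blall: "\<forall>a\<in>A. bl a < a \<and> (\<forall>i\<in>{..dl a}. e i a < bl a)"
      by blast
    have bl: "\<And>a. a \<in> A \<Longrightarrow> bl a < a" using blall by blast
    have blv: "\<And>a i. a \<in> A \<Longrightarrow> i \<le> dl a \<Longrightarrow> e i a < bl a" using blall by auto
    define g where "g = (\<lambda>a. if a \<in> A then bl a else undefined)"
    have gP: "g \<in> prodA A" unfolding g_def prodA_def using bl by auto
    then obtain f where fF: "f \<in> F" and le: "le_mod A D g f" using cofF unfolding cofinal_mod_def by blast
    obtain i where i: "i < \<kappa>" and fi: "f = e i" using e fF unfolding bij_betw_def by auto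
    obtain c where cC: "c \<in> C" and ic: "i \<le> c" using Cub i unfolding unbounded_in_def by blast
    have ck: "c < \<kappa>" using cC Cub unfolding unbounded_in_def by blast
    have T: "{a\<in>A. c < a} \<in> D" using tails ck by blast
    have "{a\<in>A. c < a} \<inter> {a\<in>A. g a \<le> f a} = {}"
    proof (rule ccontr)
      assume "\<not> ?thesis"
      then obtain a where aA: "a \<in> A" and ca: "c < a" and gf: "g a \<le> f a" by blast
      have "c \<le> dl a" using dlC aA cC ca by blast
      hence "i \<le> dl a" using ic by (simp add: order.trans)
      hence "f a < g a" using blv aA unfolding fi g_def by simp
      thus False using gf by simp
    qed
    thus False using Dint[OF T le[unfolded le_mod_def]] eD by simp
  qed
qed

end
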